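(* Let $\mathscr D:\mathscr N=\mathscr N_1\cup\cdots\cup\mathscr N_k$ be a decomposition of a chemical reaction network $\mathscr N$, let $\mathscr C_{\mathscr D}$ be its set of common complexes and $d=|\mathscr C_{\mathscr D}|$. For each $i$ let $\ell_i$ be the number of linkage classes of $\mathscr N_i$ and $h_i=|\mathscr C_i\cap\mathscr C_{\mathscr D}|$, and let $\ell$ be the number of linkage classes of $\mathscr N$. Then $\mathscr D$ is incidence independent if and only if $$\sum_{i=1}^k \ell_i-\ell=\sum_{i=1}^k h_i-d.$$
   Context: A chemical reaction network (CRN) $\mathscr N=(\mathscr S,\mathscr C,\mathscr R)$ consists of a finite set of species $\mathscr S$, a finite set of complexes $\mathscr C$ (nonnegative integer combinations of species), and a set of reactions $\mathscr R\subseteq\mathscr C\times\mathscr C$ with no reaction $(y,y)$ and every complex occurring in some reaction; it is viewed as a directed graph on $\mathscr C$. Linkage classes are the connected components of the underlying undirected graph. A decomposition $\mathscr N=\mathscr N_1\cup\cdots\cup\mathscr N_k$ is given by a partition $\{\mathscr R_1,\dots,\mathscr R_k\}$ of $\mathscr R$ (with $k\ge 2$); the subnetwork $\mathscr N_i=(\mathscr S_i,\mathscr C_i,\mathscr R_i)$ has as complex set $\mathscr C_i$ the complexes occurring in reactions of $\mathscr R_i$ and as species the species occurring in $\mathscr C_i$. The incidence map $I_a:\mathbb R^{\mathscr R}\to\mathbb R^{\mathscr C}$ sends the basis vector of a reaction $y\to y'$ to $\omega_{y'}-\omega_y$; similarly for each subnetwork (with images viewed inside $\mathbb R^{\mathscr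 C}$). The decomposition is incidence independent if $\operatorname{Im} I_a$ is the direct sum of the images of the incidence maps of the $\mathscr N_i$; since $\dim\operatorname{Im}I_a=n-\ell$ ($n$ = number of complexes), this is equivalent to $n-\ell=\sum_i(n_i-\ell_i)$. The set $\mathscr C_{\mathscr D}$ of common complexes consists of all complexes belonging to the complex sets of at least two distinct subnetworks. *)

theory Defs
  imports Complex_Main
begin

type_synonym 's complex = "'s \<Rightarrow> nat"

definition complexes_of :: "('c \<times> 'c) set \<Rightarrow> 'c set" where
  "complexes_of R = fst ` R \<union> snd ` R"

definition species_of :: "('s complex) set \<Rightarrow> 's set" where
  "species_of C = {s. \<exists>y\<in>C. y s \<noteq> 0}"

definition crn :: "'s set \<Rightarrow> ('s complex) set \<Rightarrow> ('s complex \<times> 's complex) set \<Rightarrow> bool" where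
  "crn S C R \<longleftrightarrow> finite S \<and> finite C \<and> R \<subseteq> C \<times> C
     \<and> (\<forall>y. (y, y) \<notin> R) \<and> C = complexes_of R
     \<and> (\<forall>y\<in>C. \<forall>s. y s \<noteq> 0 \<longrightarrow> s \<in> S) \<and> species_of C = S"

definition num_linkage_classes :: "('c \<times> 'c) set \<Rightarrow> nat" where
  "num_linkage_classes R = card (complexes_of R // ((R \<union> R\<inverse>)\<^sup>*))"

definition incidence_map :: "('c \<times> 'c) set \<Rightarrow> (('c \<times> 'c) \<Rightarrow> real) \<Rightarrow> ('c \<Rightarrow> real)" where
  "incidence_map R a = (\<lambda>c. \<Sum>r\<in>R. a r * ((if c = snd r then 1 else 0) - (if c = fst r then 1 else 0)))"

definition incidence_image :: "('c \<times> 'c) set \<Rightarrow> ('c \<Rightarrow> real) set" where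
  "incidence_image R = range (incidence_map R)"

definition decomposition :: "('c \<times> 'c) set \<Rightarrow> nat \<Rightarrow> (nat \<Rightarrow> ('c \<times> 'c) set) \<Rightarrow> bool" where
  "decomposition R k Rs \<longleftrightarrow> k \<ge> 2 \<and> (\<forall>i\<in>{1..k}. Rs i \<noteq> {})
     \<and> (\<forall>i\<in>{1..k}. \<forall>j\<in>{1..k}. i \<noteq> j \<longrightarrow> Rs i \<inter> Rs j = {})
     \<and> (\<Union>i\<in>{1..k}. Rs i) = R"

text \<open>Incidence independence: Im I_a is the (internal) direct sum of the Im I_i.\<close>
definition incidence_independent :: "('c \<times> 'c) set \<Rightarrow> nat \<Rightarrow> (nat \<Rightarrow> ('c \<times> 'c) set) \<Rightarrow> bool" where
  "incidence_independent R k Rs \<longleftrightarrow>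
     incidence_image R = {(\<lambda>c. \<Sum>i=1..k. v i c) | v. \<forall>i\<in>{1..k}. v i \<in> incidence_image (Rs i)}
     \<and> (\<forall>v. (\<forall>i\<in>{1..k}. v i \<in> incidence_image (Rs i)) \<and> (\<lambda>c. \<Sum>i=1..k. v i c) = (\<lambda>c. 0)
            \<longrightarrow> (\<forall>i\<in>{1..k}. v i = (\<lambda>c. 0)))"

definition common_complexes :: "nat \<Rightarrow> (nat \<Rightarrow> ('c \<times> 'c) set) \<Rightarrow> 'c set" where
  "common_complexes k Rs = {y. \<exists>i\<in>{1..k}. \<exists>j\<in>{1..k}. i \<noteq> j
       \<and> y \<in> complexes_of (Rs i) \<and> y \<in> complexes_of (Rs j)}"

end

theory Submission
  imports Defs "HOL-Library.Function_Algebras"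
begin


lemma sum_fun_app: "(sum f A) x = (\<Sum>a\<in>A. f a x)"
  for f :: "'i \<Rightarrow> 'c \<Rightarrow> 'b::comm_monoid_add"
  by (induction A rule: infinite_finite_induct) auto

lemma card_UN_eq_disjoint:
  assumes "finite I" "\<And>i. i \<in> I \<Longrightarrow> finite (B i)"
    and "card (\<Union>i\<in>I. B i) = (\<Sum>i\<in>I. card (B i))"
  shows "\<forall>i\<in>I. \<forall>j\<in>I. i \<noteq> j \<longrightarrow> B i \<inter> B j = {}"
  using assms
proof (induction I rule: finite_induct)
  case empty
  then show ?case by simp
next
  case (insert x F)
  have fU: "finite (\<Union>i\<in>F. B i)" using insert by auto
  have le: "card (\<Union>i\<in>F. B i) \<le> (\<Sum>i\<in>F. card (B i))" by (rule card_UN_le[OF insert(1)])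
  have "card (\<Union>i\<in>insert x F. B i) = card (B x \<union> (\<Union>i\<in>F. B i))" by simp
  also have "\<dots> = card (B x) + card (\<Union>i\<in>F. B i) - card (B x \<inter> (\<Union>i\<in>F. B i))"
    using card_Un_Int[of "B x" "\<Union>i\<in>F. B i"] fU insert(4) by simp
  finally have eq: "card (B x) + card (\<Union>i\<in>F. B i) - card (B x \<inter> (\<Union>i\<in>F. B i)) = card (B x) + (\<Sum>i\<in>F. card (B i))"
    using insert(5) insert(1,2) by simp
  have cm: "card (B x \<inter> (\<Union>i\<in>F. B i)) \<le> card (\<Union>i\<in>F. B i)" by (rule card_mono[OF fU]) auto
  have int0: "card (B x \<inter> (\<Union>i\<in>F. B i)) = 0" and eqF: "card (\<Union>i\<in>F. B i) = (\<Sum>i\<in>F. card (B i))"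
    using eq le cm by linarith+
  have "B x \<inter> (\<Union>i\<in>F. B i) = {}" using int0 fU insert(4) by simp
  moreover have "\<forall>i\<in>F. \<forall>j\<in>F. i \<noteq> j \<longrightarrow> B i \<inter> B j = {}"
    using insert.IH insert(4) eqF by simp
  ultimately show ?case by blast
qed

context vector_space begin

lemma span_UN_sums:
  assumes "finite I"
  shows "span (\<Union>i\<in>I. G i) = {sum v I | v. \<forall>i\<in>I. v i \<in> span (G i)}"
proof
  show "{sum v I | v. \<forall>i\<in>I. v i \<in> span (G i)} \<subseteq> span (\<Union>i\<in>I. G i)"
  proof clarify
    fix v assume "\<forall>i\<in>I. v i \<in> span (G i)"
    then show "sum v I \<in> span (\<Union>i\<in>I. G i)"
      by (intro span_sum) (meson UN_upper in_mono span_mono)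
  qed
next
  show "span (\<Union>i\<in>I. G i) \<subseteq> {sum v I | v. \<forall>i\<in>I. v i \<in> span (G i)}"
  proof
    fix x assume "x \<in> span (\<Union>i\<in>I. G i)"
    then show "x \<in> {sum v I | v. \<forall>i\<in>I. v i \<in> span (G i)}"
    proof (induction rule: span_induct_alt)
      case base
      show ?case by (intro CollectI exI[of _ "\<lambda>_. 0"]) (auto simp: span_zero)
    next
      case (step c x y)
      from step(1) obtain i0 where i0: "i0 \<in> I" "x \<in> G i0" by auto
      from step(2) obtain w where w: "y = sum w I" "\<forall>i\<in>I. w i \<in> span (G i)" by auto
      define v where "v = (\<lambda>m. w m + (if m = i0 then c *s x else 0))"
      have "sum v I = sum w I + c *s x"
        unfolding v_def sum.distrib using i0 assms by (simp add: sum.delta)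
      moreover have "\<forall>i\<in>I. v i \<in> span (G i)"
      proof
        fix i assume i: "i \<in> I"
        show "v i \<in> span (G i)"
        proof (cases "i = i0")
          case True
          have "w i0 + c *s x \<in> span (G i0)"
            by (rule span_add) (use w i0 in \<open>auto intro: span_scale span_base\<close>)
          then show ?thesis using True by (simp add: v_def)
        qed (use w i in \<open>simp add: v_def\<close>)
      qed
      ultimately have "c *s x + y = sum v I \<and> (\<forall>i\<in>I. v i \<in> span (G i))" using w by (simp add: add.commute)
      then show ?case by blast
    qed
  qed
qed

lemma direct_sum_iff:
  assumes finI: "finite I" and finG: "\<And>i. i \<in> I \<Longrightarrow> finite (G i)"
  shows "(\<forall>v. (\<forall>i\<in>I. v i \<in> span (G i)) \<and> sum v I = 0 \<longrightarrow> (\<forall>i\<in>I. v i = 0))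
     \<longleftrightarrow> dim (\<Union>i\<in>I. G i) = (\<Sum>i\<in>I. dim (G i))"
proof -
  have "\<forall>i\<in>I. \<exists>B. B \<subseteq> span (G i) \<and> independent B \<and> span (G i) \<subseteq> span B \<and> card B = dim (G i)"
    by (metis basis_exists dim_span)
  then obtain B where B: "\<And>i. i \<in> I \<Longrightarrow> B i \<subseteq> span (G i) \<and> independent (B i) \<and> span (G i) \<subseteq> span (B i) \<and> card (B i) = dim (G i)"
    by metis
  have spB: "span (B i) = span (G i)" if "i \<in> I" for i
    using B[OF that] span_eq span_superset by blast
  have finB: "finite (B i)" if "i \<in> I" for i
    using independent_span_bound[OF finG[OF that]] B[OF that] by blast
  have indB: "independent (B i)" if "i \<in> I" for i using B[OF that] by blast
  have cardB: "card (B i) = dim (G i)" if "i \<in> I" for i using B[OF that] by blast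
  define U where "U = (\<Union>i\<in>I. B i)"
  have finU: "finite U" using finB finI by (auto simp: U_def)
  have spU: "span U = span (\<Union>i\<in>I. G i)"
    unfolding span_eq
  proof
    show "U \<subseteq> span (\<Union>i\<in>I. G i)"
      unfolding U_def using B by (smt (verit, best) UN_iff UN_upper span_mono subsetD subsetI)
    show "(\<Union>i\<in>I. G i) \<subseteq> span U"
      unfolding U_def using spB
      by (smt (verit, ccfv_threshold) UN_iff UN_upper span_mono span_superset subset_iff)
  qed
  have dimU: "dim (\<Union>i\<in>I. G i) = dim U" using spU span_eq_dim by metis
  show ?thesis
  proof
    assume H: "\<forall>v. (\<forall>i\<in>I. v i \<in> span (G i)) \<and> sum v I = 0 \<longrightarrow> (\<forall>i\<in>I. v i = 0)"
    have disj: "\<forall>i\<in>I. \<forall>j\<in>I. i \<noteq> j \<longrightarrow> B i \<inter> B j = {}"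
    proof (intro ballI impI, rule ccontr)
      fix i j assume ij: "i \<in> I" "j \<in> I" "i \<noteq> j" "B i \<inter> B j \<noteq> {}"
      then obtain b where b: "b \<in> B i" "b \<in> B j" by blast
      have b0: "b \<noteq> 0" using indB[OF ij(1)] b dependent_zero by blast
      define v where "v = (\<lambda>m. (if m = i then b else 0) + (if m = j then -b else 0))"
      have "\<forall>m\<in>I. v m \<in> span (G m)"
        using b B ij by (auto simp: v_def span_zero intro!: span_neg span_add)
      moreover have "sum v I = 0"
        unfolding v_def sum.distrib using ij finI by (simp add: sum.delta)
      ultimately have "v i = 0" using H ij by blast
      then show False using b0 ij by (simp add: v_def)
    qed
    have indU: "independent U"
    proof
      assume "dependent U"
      then obtain u where u: "\<exists>w\<in>U. u w \<noteq> 0" "(\<Sum>w\<in>U. u w *s w) = 0"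
        using dependent_finite[OF finU] by blast
      define v where "v = (\<lambda>i. \<Sum>w\<in>B i. u w *s w)"
      have "(\<Sum>w\<in>U. u w *s w) = sum v I"
        unfolding U_def v_def using finI finB disj by (simp add: sum.UNION_disjoint)
      moreover have "\<forall>i\<in>I. v i \<in> span (G i)"
      proof
        fix i assume i: "i \<in> I"
        have "v i \<in> span (B i)" unfolding v_def by (rule span_sum, rule span_scale, rule span_base) simp
        then show "v i \<in> span (G i)" using spB[OF i] by simp
      qed
      ultimately have v0: "\<forall>i\<in>I. v i = 0" using H u by auto
      from u(1) obtain w i where wi: "i \<in> I" "w \<in> B i" "u w \<noteq> 0" by (auto simp: U_def)
      have "dependent (B i)"
        using dependent_finite[OF finB[OF wi(1)]] v0 wi by (auto simp: v_def)
      then show False using indB wi by blast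
    qed
    have "dim U = card U" using indU dim_eq_card_independent by blast
    also have "\<dots> = (\<Sum>i\<in>I. card (B i))"
      unfolding U_def using card_UN_disjoint[OF finI] finB disj by blast
    finally show "dim (\<Union>i\<in>I. G i) = (\<Sum>i\<in>I. dim (G i))" using dimU cardB by simp
  next
    assume E: "dim (\<Union>i\<in>I. G i) = (\<Sum>i\<in>I. dim (G i))"
    obtain U' where U': "U' \<subseteq> U" "independent U'" "U \<subseteq> span U'"
      using maximal_independent_subset by blast
    have "span U' = span U" using U' span_eq span_superset by (metis span_mono subset_antisym span_span)
    then have cU': "card U' = dim U" using dim_eq_card U'(2) by metis
    have le1: "card U \<le> (\<Sum>i\<in>I. card (B i))" unfolding U_def by (rule card_UN_le[OF finI])
    have le2: "card U' \<le> card U" using card_mono[OF finU U'(1)] .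
    have sumeq: "(\<Sum>i\<in>I. card (B i)) = (\<Sum>i\<in>I. dim (G i))" using cardB by simp
    have "card U = (\<Sum>i\<in>I. card (B i))" using le1 le2 cU' dimU E sumeq by linarith
    then have disj: "\<forall>i\<in>I. \<forall>j\<in>I. i \<noteq> j \<longrightarrow> B i \<inter> B j = {}"
      using card_UN_eq_disjoint[of I B, OF finI finB] unfolding U_def by blast
    have "card U' = card U" using le1 le2 cU' dimU E sumeq by linarith
    then have "U' = U" using card_subset_eq[OF finU U'(1)] by blast
    then have indU: "independent U" using U' by simp
    show "\<forall>v. (\<forall>i\<in>I. v i \<in> span (G i)) \<and> sum v I = 0 \<longrightarrow> (\<forall>i\<in>I. v i = 0)"
    proof (intro allI impI)
      fix v assume v: "(\<forall>i\<in>I. v i \<in> span (G i)) \<and> sum v I = 0"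
      have "\<forall>i\<in>I. \<exists>c. v i = (\<Sum>w\<in>B i. c w *s w)"
        using v spB span_finite[OF finB] by (metis (no_types, lifting) imageE)
      then obtain c where c: "\<And>i. i \<in> I \<Longrightarrow> v i = (\<Sum>w\<in>B i. c i w *s w)" by metis
      define u where "u = (\<lambda>w. c (SOME i. i \<in> I \<and> w \<in> B i) w)"
      have uc: "u w = c i w" if "i \<in> I" "w \<in> B i" for i w
      proof -
        have "(SOME i. i \<in> I \<and> w \<in> B i) = i"
          using that disj by (intro some_equality) auto
        then show ?thesis by (simp add: u_def)
      qed
      have "(\<Sum>w\<in>U. u w *s w) = (\<Sum>i\<in>I. \<Sum>w\<in>B i. u w *s w)"
        unfolding U_def using finI finB disj by (simp add: sum.UNION_disjoint)
      also have "\<dots> = (\<Sum>i\<in>I. v i)"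
        using c uc by (intro sum.cong) auto
      finally have "(\<Sum>w\<in>U. u w *s w) = 0" using v by simp
      then have u0: "\<forall>w\<in>U. u w = 0"
        using indU dependent_finite[OF finU] by blast
      show "\<forall>i\<in>I. v i = 0"
      proof
        fix i assume i: "i \<in> I"
        have "v i = (\<Sum>w\<in>B i. u w *s w)" using c[OF i] uc[OF i] by simp
        also have "\<dots> = 0" using u0 i by (auto simp: U_def intro!: sum.neutral)
        finally show "v i = 0" .
      qed
    qed
  qed
qed

end



definition fscale :: "real \<Rightarrow> ('c \<Rightarrow> real) \<Rightarrow> ('c \<Rightarrow> real)" where
  "fscale r f = (\<lambda>x. r * f x)"

interpretation fv: vector_space fscale
  by unfold_locales (auto simp: fscale_def algebra_simps fun_eq_iff)

lemma fscale_0[simp]: "fscale 0 f = 0" by (simp add: fscale_def fun_eq_iff)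

definition delta :: "'c \<Rightarrow> 'c \<Rightarrow> real" where
  "delta y = (\<lambda>c. if c = y then 1 else 0)"

definition gen :: "'c \<times> 'c \<Rightarrow> 'c \<Rightarrow> real" where
  "gen r = delta (snd r) - delta (fst r)"

lemma incidence_map_sum: "incidence_map R a = (\<Sum>r\<in>R. fscale (a r) (gen r))"
  by (rule ext) (simp add: incidence_map_def sum_fun_app fscale_def gen_def delta_def)

lemma incidence_image_span:
  assumes "finite R"
  shows "incidence_image R = fv.span (gen ` R)"
proof
  show "incidence_image R \<subseteq> fv.span (gen ` R)"
    unfolding incidence_image_def incidence_map_sum
    by (clarify, rule fv.span_sum, rule fv.span_scale, rule fv.span_base) simp
next
  show "fv.span (gen ` R) \<subseteq> incidence_image R"
  proof
    fix x assume "x \<in> fv.span (gen ` R)"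
    then show "x \<in> incidence_image R"
    proof (induction rule: fv.span_induct_alt)
      case base
      have "incidence_map R (\<lambda>_. 0) = 0" by (rule ext) (simp add: incidence_map_def)
      then show ?case unfolding incidence_image_def by (metis rangeI)
    next
      case (step c x y)
      from step(1) obtain r0 where r0: "r0 \<in> R" "x = gen r0" by auto
      from step(2) obtain a where a: "y = incidence_map R a" unfolding incidence_image_def by auto
      define a' where "a' = (\<lambda>r. a r + (if r = r0 then c else 0))"
      have "incidence_map R a' = (\<Sum>r\<in>R. fscale (a r) (gen r)) + (\<Sum>r\<in>R. fscale (if r = r0 then c else 0) (gen r))"
        unfolding incidence_map_sum a'_def fv.scale_left_distrib sum.distrib ..
      also have "(\<Sum>r\<in>R. fscale (if r = r0 then c else 0) (gen r)) = fscale c (gen r0)"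
      proof -
        have "(\<Sum>r\<in>R. fscale (if r = r0 then c else 0) (gen r)) = (\<Sum>r\<in>R. if r = r0 then fscale c (gen r0) else 0)"
          by (rule sum.cong) auto
        then show ?thesis using r0 assms by (simp add: sum.delta)
      qed
      finally have "incidence_map R a' = fscale c x + y"
        by (simp only: a r0(2) incidence_map_sum add.commute)
      then show ?case unfolding incidence_image_def by (metis rangeI)
    qed
  qed
qed




abbreviation conn :: "('c \<times> 'c) set \<Rightarrow> ('c \<times> 'c) set" where
  "conn E \<equiv> (E \<union> E\<inverse>)\<^sup>*"

lemma conn_sym: "(x, y) \<in> conn E \<Longrightarrow> (y, x) \<in> conn E"
  by (metis converse_Un converse_converse rtrancl_converseI sup_commute)

lemma conn_trans: "(x, y) \<in> conn E \<Longrightarrow> (y, z) \<in> conn E \<Longrightarrow> (x, z) \<in> conn E"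
  by (rule rtrancl_trans)

lemma conn_closed:
  assumes "E \<subseteq> V \<times> V" "x \<in> V" "(x, y) \<in> conn E"
  shows "y \<in> V"
  using assms(3,2) by (induction rule: rtrancl_induct) (use assms(1) in auto)

lemma conn_path:
  assumes "(x, y) \<in> conn E"
  shows "delta y - delta x \<in> fv.span (gen ` E)"
  using assms
proof (induction rule: rtrancl_induct)
  case base
  then show ?case by (metis diff_self fv.span_zero)
next
  case (step y z)
  have "delta z - delta y \<in> fv.span (gen ` E)"
  proof (cases "(y, z) \<in> E")
    case True
    then have "gen (y, z) \<in> fv.span (gen ` E)" by (intro fv.span_base) auto
    then show ?thesis by (simp add: gen_def)
  next
    case False
    then have "(z, y) \<in> E" using step(2) by auto
    then have "gen (z, y) \<in> fv.span (gen ` E)" by (intro fv.span_base) auto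
    then have "- gen (z, y) \<in> fv.span (gen ` E)" by (rule fv.span_neg)
    then show ?thesis by (simp add: gen_def)
  qed
  then have "(delta y - delta x) + (delta z - delta y) \<in> fv.span (gen ` E)"
    using step(3) by (rule fv.span_add[rotated])
  moreover have "(delta y - delta x) + (delta z - delta y) = delta z - delta x" by (simp add: fun_eq_iff)
  ultimately show ?case by (simp add: fun_diff_def)
qed

lemma conn_not_span:
  assumes "E \<subseteq> V \<times> V" "finite V" "a \<in> V" "(a, b) \<notin> conn E"
  shows "gen (a, b) \<notin> fv.span (gen ` E)"
proof
  define K where "K = conn E `` {a}"
  have finK: "finite K" using conn_closed[OF assms(1,3)] assms(2)
    by (auto simp: K_def intro: finite_subset)
  have sd: "(\<Sum>x\<in>K. delta q x) = (if q \<in> K then 1 else 0)" for q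
    using finK by (simp add: delta_def sum.delta)
  assume "gen (a, b) \<in> fv.span (gen ` E)"
  then have "(\<Sum>x\<in>K. gen (a, b) x) = 0"
  proof (induction rule: fv.span_induct_alt)
    case base
    then show ?case by simp
  next
    case (step c f y)
    from step(1) obtain p q where pq: "(p, q) \<in> E" "f = gen (p, q)" by auto
    have "p \<in> K \<longleftrightarrow> q \<in> K"
    proof
      assume "p \<in> K" then show "q \<in> K" using pq(1) unfolding K_def
        by (meson Image_singleton_iff UnI1 rtrancl.rtrancl_into_rtrancl)
    next
      assume "q \<in> K" then show "p \<in> K" using pq(1) unfolding K_def
        by (meson Image_singleton_iff UnI2 converseI rtrancl.rtrancl_into_rtrancl)
    qed
    then have "(\<Sum>x\<in>K. f x) = 0" using pq(2) sd[of p] sd[of q]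
      by (simp add: gen_def sum_subtractf)
    then show ?case using step(2)
      by (simp add: fscale_def sum.distrib sum_distrib_left[symmetric])
  qed
  moreover have "a \<in> K" by (simp add: K_def)
  moreover have "b \<notin> K" using assms(4) by (simp add: K_def)
  ultimately show False using sd[of a] sd[of b] by (simp add: gen_def sum_subtractf)
qed




lemma quotient_image: "A // r = (\<lambda>x. r `` {x}) ` A"
  by (auto simp: quotient_def)

lemma conn_class_eq:
  assumes "(a, x) \<in> conn E"
  shows "conn E `` {x} = conn E `` {a}"
proof (intro equalityI subsetI)
  fix y assume "y \<in> conn E `` {x}"
  then have "(x, y) \<in> conn E" by simp
  then have "(a, y) \<in> conn E" using assms by (meson rtrancl_trans)
  then show "y \<in> conn E `` {a}" by simp
next
  fix y assume "y \<in> conn E `` {a}"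
  then have "(a, y) \<in> conn E" by simp
  moreover have "(x, a) \<in> conn E" using conn_sym[OF assms] .
  ultimately have "(x, y) \<in> conn E" by (meson rtrancl_trans)
  then show "y \<in> conn E `` {x}" by simp
qed

lemma clsA_lemma:
  assumes "A = conn E `` {a} \<union> conn E `` {b}" "x \<in> A" "(x, y) \<in> conn E"
  shows "y \<in> A"
proof -
  have "(a, x) \<in> conn E \<or> (b, x) \<in> conn E" using assms(1,2) by simp
  then have "(a, y) \<in> conn E \<or> (b, y) \<in> conn E" using assms(3) rtrancl_trans by metis
  then show ?thesis using assms(1) by simp
qed

lemma conn_Q:
  assumes A: "A = conn E `` {a} \<union> conn E `` {b}"
  shows "conn (insert (a, b) E) = conn E \<union> A \<times> A"
proof
  let ?r = "conn E" and ?r' = "conn (insert (a, b) E)"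
  have clsA: "y \<in> A" if "x \<in> A" "(x, y) \<in> ?r" for x y
    using clsA_lemma[OF A that] .
  have clsA': "x \<in> A" if "y \<in> A" "(x, y) \<in> ?r" for x y
    using clsA[OF that(1) conn_sym[OF that(2)]] .
  have aA: "a \<in> A" "b \<in> A" using A by auto
  show "?r' \<subseteq> ?r \<union> A \<times> A"
  proof
    fix p assume "p \<in> ?r'"
    then obtain x z where p: "p = (x, z)" "(x, z) \<in> ?r'" by (cases p) auto
    from p(2) have "(x, z) \<in> ?r \<union> A \<times> A"
    proof (induction rule: rtrancl_induct)
      case base then show ?case by simp
    next
      case (step y z)
      show ?case
      proof (cases "(y, z) \<in> E \<union> E\<inverse>")
        case True
        then have yz: "(y, z) \<in> ?r" by (rule r_into_rtrancl)
        from step(3) show ?thesis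
        proof
          assume "(x, y) \<in> ?r" 
          then have "(x, z) \<in> ?r" using yz by (rule rtrancl_trans)
          then show ?thesis by (rule UnI1)
        next
          assume "(x, y) \<in> A \<times> A" 
          then have "x \<in> A" "z \<in> A" using yz clsA by auto
          then show ?thesis by simp
        qed
      next
        case False
        then have "(y, z) = (a, b) \<or> (y, z) = (b, a)" using step(2) by auto
        then have yzA: "y \<in> A" "z \<in> A" using aA by auto
        from step(3) show ?thesis
        proof
          assume "(x, y) \<in> ?r" 
          then have "x \<in> A" using yzA clsA' by simp
          then show ?thesis using yzA by simp
        next
          assume "(x, y) \<in> A \<times> A" then show ?thesis using yzA by simp
        qed
      qed
    qed
    then show "p \<in> ?r \<union> A \<times> A" using p by simp
  qed
next
  let ?r = "conn E" and ?r' = "conn (insert (a, b) E)"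
  have sub: "?r \<subseteq> ?r'" by (rule rtrancl_mono) auto
  have ab: "(a, b) \<in> ?r'" by (rule r_into_rtrancl) simp
  have ba: "(b, a) \<in> ?r'" by (rule conn_sym[OF ab])
  have toa: "(x, a) \<in> ?r'" if "x \<in> A" for x
  proof -
    have "(a, x) \<in> ?r \<or> (b, x) \<in> ?r" using that A by simp
    then have "(a, x) \<in> ?r' \<or> (b, x) \<in> ?r'" using sub by (meson subsetD)
    then have "(x, a) \<in> ?r' \<or> (x, b) \<in> ?r'" using conn_sym by meson
    then show ?thesis using ba by (meson rtrancl_trans)
  qed
  have AA: "(x, y) \<in> ?r'" if "x \<in> A" "y \<in> A" for x y
  proof -
    have "(a, y) \<in> ?r'" using conn_sym[OF toa[OF that(2)]] .
    then show ?thesis using toa[OF that(1)] by (meson rtrancl_trans)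
  qed
  show "?r \<union> A \<times> A \<subseteq> ?r'"
  proof
    fix p assume "p \<in> ?r \<union> A \<times> A"
    then show "p \<in> ?r'" using sub AA by (cases p) auto
  qed
qed

lemma conn_merge:
  assumes "E \<subseteq> V \<times> V" "finite V" "a \<in> V" "b \<in> V" "(a, b) \<notin> conn E"
  shows "card (V // conn E) = Suc (card (V // conn (insert (a, b) E)))"
proof -
  let ?r = "conn E" and ?r' = "conn (insert (a, b) E)"
  define A where "A = ?r `` {a} \<union> ?r `` {b}"
  have clsA: "y \<in> A" if "x \<in> A" "(x, y) \<in> ?r" for x y
    using clsA_lemma[OF A_def that] .
  have Q: "?r' = ?r \<union> A \<times> A" by (rule conn_Q[OF A_def])
  have img': "?r' `` {x} = (if x \<in> A then A else ?r `` {x})" for x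
  proof (cases "x \<in> A")
    case True
    have "?r `` {x} \<subseteq> A" using clsA[OF True] by blast
    then show ?thesis using True Q by auto
  next
    case False
    then show ?thesis using Q by auto
  qed
  define W where "W = (\<lambda>x. ?r `` {x}) ` (V - A)"
  have aA: "a \<in> A" "b \<in> A" by (auto simp: A_def)
  have q': "V // ?r' = insert A W"
  proof -
    have "V // ?r' = (\<lambda>x. ?r' `` {x}) ` (V \<inter> A) \<union> (\<lambda>x. ?r' `` {x}) ` (V - A)"
      unfolding quotient_image by blast
    also have "(\<lambda>x. ?r' `` {x}) ` (V \<inter> A) = {A}"
      using img' aA assms(3) by auto
    also have "(\<lambda>x. ?r' `` {x}) ` (V - A) = W"
      unfolding W_def using img' by (intro image_cong) auto
    finally show ?thesis by simp
  qed
  have imgA: "?r `` {x} = ?r `` {a} \<or> ?r `` {x} = ?r `` {b}" if "x \<in> A" for x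
  proof -
    have "(a, x) \<in> ?r \<or> (b, x) \<in> ?r" using that A_def by simp
    then show ?thesis using conn_class_eq by metis
  qed
  have q: "V // ?r = insert (?r `` {a}) (insert (?r `` {b}) W)"
  proof -
    have "V // ?r = (\<lambda>x. ?r `` {x}) ` (V \<inter> A) \<union> W" unfolding quotient_image W_def by blast
    moreover have "(\<lambda>x. ?r `` {x}) ` (V \<inter> A) = {?r `` {a}, ?r `` {b}}"
    proof
      show "(\<lambda>x. ?r `` {x}) ` (V \<inter> A) \<subseteq> {?r `` {a}, ?r `` {b}}" using imgA by blast
      show "{?r `` {a}, ?r `` {b}} \<subseteq> (\<lambda>x. ?r `` {x}) ` (V \<inter> A)" using aA assms(3,4) by blast
    qed
    ultimately show ?thesis by simp
  qed
  have xin: "x \<in> ?r `` {x}" for x by simp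
  have notW: "S \<notin> W" if "S \<subseteq> A" for S
  proof
    assume "S \<in> W"
    then obtain x where x: "x \<in> V" "x \<notin> A" "S = ?r `` {x}" unfolding W_def by blast
    have "x \<in> S" using x xin by simp
    then show False using x that by blast
  qed
  have ab_ne: "?r `` {a} \<noteq> ?r `` {b}"
  proof
    assume "?r `` {a} = ?r `` {b}"
    then have "b \<in> ?r `` {a}" using xin[of b] by simp
    then show False using assms(5) by simp
  qed
  have n1: "?r `` {a} \<notin> W" "?r `` {b} \<notin> W" "A \<notin> W" by (rule notW; simp add: A_def)+
  have finW: "finite W" unfolding W_def using assms(2) by simp
  show ?thesis unfolding q q' using n1 ab_ne finW by simp
qed


lemma graph_rank:
  assumes "finite V" "E \<subseteq> V \<times> V"
  shows "\<exists>B. finite B \<and> fv.independent B \<and> fv.span B = fv.span (gen ` E)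
           \<and> card B + card (V // conn E) = card V"
proof -
  have "finite E" using assms finite_subset by blast
  then show ?thesis using assms(2)
  proof (induction E rule: finite_induct)
    case empty
    have "V // conn {} = (\<lambda>x. {x}) ` V" by (simp add: quotient_image)
    then have "card (V // conn {}) = card V" by (simp add: card_image)
    then show ?case using fv.independent_empty by (intro exI[of _ "{}"]) auto
  next
    case (insert e F)
    obtain a b where e: "e = (a, b)" by (cases e)
    have FV: "F \<subseteq> V \<times> V" and abV: "a \<in> V" "b \<in> V" using insert(4) e by auto
    from insert.IH[OF FV] obtain B where B: "finite B" "fv.independent B"
      "fv.span B = fv.span (gen ` F)" "card B + card (V // conn F) = card V" by blast
    show ?case
    proof (cases "(a, b) \<in> conn F")
      case True
      have "gen (a, b) \<in> fv.span (gen ` F)" using conn_path[OF True] by (simp add: gen_def)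
      then have sp: "fv.span (gen ` insert e F) = fv.span (gen ` F)"
        using e by (simp add: fv.span_redundant)
      have "conn (insert e F) = conn F"
      proof (rule rtrancl_subset)
        show "F \<union> F\<inverse> \<subseteq> insert e F \<union> (insert e F)\<inverse>" by blast
        have "(b, a) \<in> conn F" using conn_sym[OF True] .
        then show "insert e F \<union> (insert e F)\<inverse> \<subseteq> conn F" using True e by auto
      qed
      then show ?thesis using B sp by auto
    next
      case False
      have ns: "gen (a, b) \<notin> fv.span B" using conn_not_span[OF FV assms(1) abV(1) False] B(3) by simp
      then have nB: "gen (a, b) \<notin> B" using fv.span_base by blast
      have ind: "fv.independent (insert (gen (a, b)) B)" using fv.independent_insertI[OF ns B(2)] .
      have sp: "fv.span (insert (gen (a, b)) B) = fv.span (gen ` insert e F)"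
        using B(3) e by (simp add: fv.span_insert)
      have cq: "card (V // conn F) = Suc (card (V // conn (insert e F)))"
        using conn_merge[OF FV assms(1) abV False] e by simp
      show ?thesis
        using B nB ind sp cq by (intro exI[of _ "insert (gen (a, b)) B"]) auto
    qed
  qed
qed




lemma card_split: "finite A \<Longrightarrow> card A = card (A \<inter> B) + card (A - B)"
proof -
  assume f: "finite A"
  have "A = (A \<inter> B) \<union> (A - B)" by blast
  then have "card A = card ((A \<inter> B) \<union> (A - B))" by simp
  also have "\<dots> = card (A \<inter> B) + card (A - B)" using f by (intro card_Un_disjoint) auto
  finally show ?thesis .
qed

lemma finite_complexes_of: "finite R \<Longrightarrow> finite (complexes_of R)"
  by (simp add: complexes_of_def)

lemma net_rank:
  assumes "finite R"
  shows "int (fv.dim (gen ` R)) = int (card (complexes_of R)) - int (num_linkage_classes R)"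
proof -
  have sub: "R \<subseteq> complexes_of R \<times> complexes_of R"
    by (auto simp: complexes_of_def intro: rev_image_eqI)
  obtain B where B: "finite B" "fv.independent B" "fv.span B = fv.span (gen ` R)"
      "card B + card (complexes_of R // conn R) = card (complexes_of R)"
    using graph_rank[OF finite_complexes_of[OF assms] sub] by blast
  have "fv.dim (gen ` R) = card B" using fv.dim_eq_card[OF B(3) B(2)] .
  then show ?thesis using B(4) unfolding num_linkage_classes_def by simp
qed

lemma sum_lambda: "(\<lambda>c. \<Sum>i\<in>A. v i c) = sum v A"
  by (rule ext) (simp add: sum_fun_app)

theorem proposition5:
  fixes S :: "'s set" and C :: "'s complex set" and R :: "('s complex \<times> 's complex) set"
    and k :: nat and Rs :: "nat \<Rightarrow> ('s complex \<times> 's complex) set"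
  assumes "crn S C R" and "decomposition R k Rs"
  shows "incidence_independent R k Rs \<longleftrightarrow>
    (\<Sum>i=1..k. int (num_linkage_classes (Rs i))) - int (num_linkage_classes R)
      = (\<Sum>i=1..k. int (card (complexes_of (Rs i) \<inter> common_complexes k Rs)))
        - int (card (common_complexes k Rs))"
proof -
  define I where "I = {1..k}"
  have finI: "finite I" by (simp add: I_def)
  have finC0: "finite C" and RC: "R \<subseteq> C \<times> C" and CR: "C = complexes_of R"
    using assms(1) unfolding crn_def by blast+
  have finC: "finite (complexes_of R)" using finC0 CR by simp
  have finR: "finite R" using RC finC CR by (metis finite_SigmaI finite_subset)
  have RU: "R = (\<Union>i\<in>I. Rs i)" and disjR: "\<forall>i\<in>I. \<forall>j\<in>I. i \<noteq> j \<longrightarrow> Rs i \<inter> Rs j = {}"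
    using assms(2) unfolding decomposition_def I_def by blast+
  have finRs: "finite (Rs i)" if "i \<in> I" for i using RU that finR by (metis UN_upper finite_subset)
  have genU: "gen ` R = (\<Union>i\<in>I. gen ` Rs i)" using RU by auto
  have im: "incidence_image (Rs i) = fv.span (gen ` Rs i)" if "i \<in> I" for i
    using incidence_image_span[OF finRs[OF that]] .
  have imR: "incidence_image R = fv.span (gen ` R)" using incidence_image_span[OF finR] .
  have c1: "incidence_image R = {(\<lambda>c. \<Sum>i=1..k. v i c) | v. \<forall>i\<in>{1..k}. v i \<in> incidence_image (Rs i)}"
  proof -
    have "incidence_image R = {sum v I | v. \<forall>i\<in>I. v i \<in> fv.span (gen ` Rs i)}"
      unfolding imR genU by (rule fv.span_UN_sums[OF finI])
    also have "\<dots> = {(\<lambda>c. \<Sum>i=1..k. v i c) | v. \<forall>i\<in>{1..k}. v i \<in> incidence_image (Rs i)}"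
      unfolding sum_lambda using im by (auto simp: I_def)
    finally show ?thesis .
  qed
  have z: "(\<lambda>c. 0::real) = (0 :: 's complex \<Rightarrow> real)" by (simp add: zero_fun_def)
  have ball: "(\<forall>i\<in>I. v i \<in> incidence_image (Rs i)) \<longleftrightarrow> (\<forall>i\<in>I. v i \<in> fv.span (gen ` Rs i))" for v
    using im by auto
  have II: "incidence_independent R k Rs \<longleftrightarrow>
      (\<forall>v. (\<forall>i\<in>I. v i \<in> fv.span (gen ` Rs i)) \<and> sum v I = 0 \<longrightarrow> (\<forall>i\<in>I. v i = 0))"
    using c1 unfolding incidence_independent_def I_def[symmetric] sum_lambda z ball by simp
  also have "\<dots> \<longleftrightarrow> fv.dim (\<Union>i\<in>I. gen ` Rs i) = (\<Sum>i\<in>I. fv.dim (gen ` Rs i))"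
    by (rule fv.direct_sum_iff[OF finI]) (simp add: finRs)
  also have "\<dots> \<longleftrightarrow> int (fv.dim (gen ` R)) = (\<Sum>i\<in>I. int (fv.dim (gen ` Rs i)))"
    unfolding genU by (simp only: of_nat_sum[symmetric] of_nat_eq_iff)
  also have "(\<Sum>i\<in>I. int (fv.dim (gen ` Rs i))) =
      (\<Sum>i\<in>I. int (card (complexes_of (Rs i)))) - (\<Sum>i\<in>I. int (num_linkage_classes (Rs i)))"
  proof -
    have "(\<Sum>i\<in>I. int (fv.dim (gen ` Rs i))) =
      (\<Sum>i\<in>I. int (card (complexes_of (Rs i))) - int (num_linkage_classes (Rs i)))"
      by (rule sum.cong[OF refl]) (rule net_rank[OF finRs])
    then show ?thesis by (simp only: sum_subtractf)
  qed
  finally have main: "incidence_independent R k Rs \<longleftrightarrow>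
      int (card (complexes_of R)) - int (num_linkage_classes R) =
      (\<Sum>i\<in>I. int (card (complexes_of (Rs i)))) - (\<Sum>i\<in>I. int (num_linkage_classes (Rs i)))"
    unfolding net_rank[OF finR] .
  define CD where "CD = common_complexes k Rs"
  have CDI: "CD = {y. \<exists>i\<in>I. \<exists>j\<in>I. i \<noteq> j \<and> y \<in> complexes_of (Rs i) \<and> y \<in> complexes_of (Rs j)}"
    unfolding CD_def common_complexes_def I_def ..
  have CU: "complexes_of R = (\<Union>i\<in>I. complexes_of (Rs i))"
  proof -
    have "complexes_of R = fst ` (\<Union>i\<in>I. Rs i) \<union> snd ` (\<Union>i\<in>I. Rs i)"
      unfolding complexes_of_def RU[symmetric] ..
    also have "\<dots> = (\<Union>i\<in>I. fst ` Rs i \<union> snd ` Rs i)" by (simp only: image_UN UN_Un_distrib)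
    finally show ?thesis unfolding complexes_of_def .
  qed
  have finCi: "finite (complexes_of (Rs i))" if "i \<in> I" for i
    using finite_complexes_of[OF finRs[OF that]] .
  have CDsub: "CD \<subseteq> complexes_of R"
  proof
    fix y assume "y \<in> CD"
    then obtain i where "i \<in> I" "y \<in> complexes_of (Rs i)" unfolding CDI by blast
    then show "y \<in> complexes_of R" unfolding CU by (rule UN_I)
  qed
  have split: "int (card (complexes_of (Rs i))) = int (card (complexes_of (Rs i) \<inter> CD)) + int (card (complexes_of (Rs i) - CD))"
    if "i \<in> I" for i using card_split[OF finCi[OF that], of CD] by simp
  have disj: "\<forall>i\<in>I. \<forall>j\<in>I. i \<noteq> j \<longrightarrow> (complexes_of (Rs i) - CD) \<inter> (complexes_of (Rs j) - CD) = {}"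
  proof (intro ballI impI)
    fix i j assume ij: "i \<in> I" "j \<in> I" "i \<noteq> j"
    show "(complexes_of (Rs i) - CD) \<inter> (complexes_of (Rs j) - CD) = {}"
    proof (rule ccontr)
      assume "(complexes_of (Rs i) - CD) \<inter> (complexes_of (Rs j) - CD) \<noteq> {}"
      then obtain y where y: "y \<in> complexes_of (Rs i)" "y \<in> complexes_of (Rs j)" "y \<notin> CD" by blast
      have "\<exists>i\<in>I. \<exists>j\<in>I. i \<noteq> j \<and> y \<in> complexes_of (Rs i) \<and> y \<in> complexes_of (Rs j)"
        using ij y(1,2) by blast
      then have "y \<in> CD" unfolding CDI by (simp only: mem_Collect_eq)
      then show False using y(3) by contradiction
    qed
  qed
  have U2: "(\<Union>i\<in>I. complexes_of (Rs i) - CD) = complexes_of R - CD" unfolding CU by blast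
  have "card (complexes_of R - CD) = (\<Sum>i\<in>I. card (complexes_of (Rs i) - CD))"
    unfolding U2[symmetric]
  proof (rule card_UN_disjoint[OF finI _ disj])
    show "\<forall>i\<in>I. finite (complexes_of (Rs i) - CD)" using finCi by blast
  qed
  moreover have "card (complexes_of R) = card CD + card (complexes_of R - CD)"
  proof -
    have "complexes_of R \<inter> CD = CD" using CDsub by blast
    then show ?thesis using card_split[OF finC, of CD] by simp
  qed
  ultimately have "card (complexes_of R) = card CD + (\<Sum>i\<in>I. card (complexes_of (Rs i) - CD))"
    by (simp only:)
  then have comb0: "int (card (complexes_of R)) = int (card CD) + (\<Sum>i\<in>I. int (card (complexes_of (Rs i) - CD)))"
    by (simp only: of_nat_add of_nat_sum)
  have "(\<Sum>i\<in>I. int (card (complexes_of (Rs i)))) =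
      (\<Sum>i\<in>I. int (card (complexes_of (Rs i) \<inter> CD)) + int (card (complexes_of (Rs i) - CD)))"
    by (rule sum.cong[OF refl]) (rule split)
  then have comb: "(\<Sum>i\<in>I. int (card (complexes_of (Rs i)))) =
      (\<Sum>i\<in>I. int (card (complexes_of (Rs i) \<inter> CD))) + int (card (complexes_of R)) - int (card CD)"
    using comb0 by (simp only: sum.distrib)
  show ?thesis unfolding main I_def[symmetric] CD_def[symmetric] using comb by linarith
qed


end
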